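(* Let $0<p<1$ and let $k\ge 1$ be an integer. A coin showing heads with probability $p$ and tails with probability $1-p$ is flipped independently until $k$ consecutive heads first appear; let $Y$ be the number of flips. Then \[ E(Y) = p^{-1}+p^{-2}+\cdots+p^{-k} = \frac{1-p^k}{(1-p)p^k},\qquad E(Y^2) = \frac{2(1-p^k)}{(1-p)^2 p^{2k}} - \frac{2k+1-p^k}{(1-p)p^k}, \] \[ E(Y^3) = \frac{6(1-p^k)}{(1-p)^3 p^{3k}} - \frac{12k+6-(6k+6)p^k}{(1-p)^2 p^{2k}} + \frac{3k^2+3k+1-p^k}{(1-p)p^k}, \] \[ E(Y^4) = \frac{24(1-p^k)}{(1-p)^4 p^{4k}} - \frac{72k+36-(48k+36)p^k}{(1-p)^3 p^{3k}} + \frac{48k^2+48k+14-(12k^2+24k+14)p^k}{(1-p)^2 p^{2k}} - \frac{4k^3+6k^2+4k+1-p^k}{(1-p) p^k}. \] *)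

theory Defs
  imports "HOL-Probability.Probability"
begin

text \<open>An outcome is an infinite stream of coin flips; True = heads.
  Flips are indexed 0,1,2,...; the value is the number of flips n performed
  when k consecutive heads first appear, i.e. the least n with n \<ge> k such
  that flips n-k, ..., n-1 are all heads.\<close>
definition run_time :: "nat \<Rightarrow> bool stream \<Rightarrow> nat" where
  "run_time k \<omega> = (LEAST n. k \<le> n \<and> (\<forall>i\<in>{n-k..<n}. \<omega> !! i))"

definition coin_space :: "real \<Rightarrow> bool stream measure" where
  "coin_space p = stream_space (measure_pmf (bernoulli_pmf p))"

end

theory Submission
  imports Defs
begin


lemma measurable_prepend[measurable]:
  assumes "set xs \<subseteq> space M"
  shows "(\<lambda>\<omega>. xs @- \<omega>) \<in> measurable (stream_space M) (stream_space M)"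
  using assms
proof (induction xs)
  case Nil then show ?case by simp
next
  case (Cons x xs)
  then have "(\<lambda>\<omega>. x ## (xs @- \<omega>)) \<in> measurable (stream_space M) (stream_space M)"
    by (intro measurable_Stream) auto
  then show ?case by simp
qed

definition Prt :: "nat \<Rightarrow> nat \<Rightarrow> bool stream \<Rightarrow> bool" where
  "Prt k n \<omega> = (k \<le> n \<and> (\<forall>i\<in>{n-k..<n}. \<omega> !! i))"

definition Yt :: "nat \<Rightarrow> bool stream \<Rightarrow> ennreal" where
  "Yt k \<omega> = (if \<exists>n. Prt k n \<omega> then ennreal (real (run_time k \<omega>)) else \<top>)"

lemma pred_snth: "Measurable.pred (stream_space (measure_pmf B)) (\<lambda>\<omega>. \<omega> !! i)"
proof -
  have "(\<lambda>\<omega>. \<omega> !! i) \<in> measurable (stream_space (measure_pmf B)) (measure_pmf B)"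
    by (rule measurable_snth)
  then show ?thesis by (simp add: measurable_cong_sets)
qed

lemma pred_Prt[measurable]: "Measurable.pred (stream_space (measure_pmf B)) (Prt k n)"
  unfolding Prt_def using pred_snth by measurable

lemma meas_run_time[measurable]: "run_time k \<in> measurable (stream_space (measure_pmf B)) (count_space UNIV)"
  unfolding run_time_def
  using pred_Prt[unfolded Prt_def] by measurable

lemma meas_Yt[measurable]: "Yt k \<in> borel_measurable (stream_space (measure_pmf B))"
  unfolding Yt_def by measurable

lemma step_decomp:
  assumes p: "0 \<le> p" "p \<le> 1" and G[measurable]: "G \<in> borel_measurable (coin_space p)"
  shows "(\<integral>\<^sup>+\<omega>. G (xs @- \<omega>) \<partial>coin_space p) =
     ennreal p * (\<integral>\<^sup>+\<omega>. G (xs @- True ## \<omega>) \<partial>coin_space p)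
     + ennreal (1-p) * (\<integral>\<^sup>+\<omega>. G (xs @- False ## \<omega>) \<partial>coin_space p)"
proof -
  interpret prob_space "measure_pmf (bernoulli_pmf p)" by (rule prob_space_measure_pmf)
  have m: "(\<lambda>\<omega>. G (xs @- \<omega>)) \<in> borel_measurable (coin_space p)"
    unfolding coin_space_def using G[unfolded coin_space_def] by measurable
  show ?thesis
    unfolding coin_space_def
    apply (subst prob_space.nn_integral_stream_space[OF prob_space_measure_pmf])
    using m apply (simp add: coin_space_def)
    using p apply (simp add: mult.commute)
    done
qed

lemma iter_decomp:
  assumes p: "0 \<le> p" "p \<le> 1" and G[measurable]: "G \<in> borel_measurable (coin_space p)"
  shows "(\<integral>\<^sup>+\<omega>. G \<omega> \<partial>coin_space p) =
     (\<Sum>i<j. ennreal (p^i*(1-p)) * (\<integral>\<^sup>+\<omega>. G (replicate i True @- False ## \<omega>) \<partial>coin_space p))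
     + ennreal (p^j) * (\<integral>\<^sup>+\<omega>. G (replicate j True @- \<omega>) \<partial>coin_space p)"
proof (induction j)
  case 0 then show ?case by simp
next
  case (Suc j)
  have r: "replicate (Suc j) True @- \<omega> = replicate j True @- True ## \<omega>" for \<omega>
    by (induction j) auto
  show ?case
    unfolding Suc.IH step_decomp[OF p G, of "replicate j True"] r
    using p
    by (simp add: distrib_left ennreal_mult' mult.assoc[symmetric] add_ac mult.commute)
qed

lemma snth_pre: "(replicate i True @- False ## \<omega>) !! j = (if j < i then True else if j = i then False else \<omega> !! (j - Suc i))"
proof -
  have "(replicate i True @- False ## \<omega>) !! j = (if j < i then True else (False ## \<omega>) !! (j - i))"
    by (simp add: shift_snth)
  also have "\<dots> = (if j < i then True else if j = i then False else \<omega> !! (j - Suc i))"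
  proof (cases "j < i \<or> j = i")
    case False
    then obtain m where m: "j - i = Suc m" "j - Suc i = m" by (metis Suc_diff_Suc diff_Suc_1 linorder_neqE_nat zero_less_diff)
    then show ?thesis using False by simp
  qed auto
  finally show ?thesis .
qed

lemma Prt_pre1:
  assumes "i < k" "Prt k n (replicate i True @- False ## \<omega>)"
  shows "Suc i \<le> n \<and> Prt k (n - Suc i) \<omega>"
proof -
  note H = assms(2)
  have kn: "k \<le> n" using H unfolding Prt_def by auto
  have W: "\<And>j. n - k \<le> j \<Longrightarrow> j < n \<Longrightarrow> (replicate i True @- False ## \<omega>) !! j"
    using H unfolding Prt_def by (simp only: atLeastLessThan_iff Ball_def)
  have big: "Suc i + k \<le> n"
  proof (rule ccontr)
    assume "\<not> Suc i + k \<le> n"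
    then have "n - k \<le> i" "i < n" using kn assms by auto
    from W[OF this] show False unfolding snth_pre by simp
  qed
  have "\<omega> !! j" if "n - Suc i - k \<le> j" "j < n - Suc i" for j
  proof -
    have a: "n - k \<le> j + Suc i" "j + Suc i < n" using that big by linarith+
    have "(replicate i True @- False ## \<omega>) !! (j + Suc i)" by (rule W[OF a])
    then show ?thesis unfolding snth_pre by simp
  qed
  then show ?thesis using big unfolding Prt_def by (intro conjI ballI) auto
qed

lemma Prt_pre2:
  assumes "i < k" "Suc i \<le> n \<and> Prt k (n - Suc i) \<omega>"
  shows "Prt k n (replicate i True @- False ## \<omega>)"
proof -
  note H = assms(2)
  then have kn: "k \<le> n - Suc i" and "Suc i \<le> n" unfolding Prt_def by auto
  have W: "\<And>j. n - Suc i - k \<le> j \<Longrightarrow> j < n - Suc i \<Longrightarrow> \<omega> !! j"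
    using H unfolding Prt_def by (simp only: atLeastLessThan_iff Ball_def)
  have "(replicate i True @- False ## \<omega>) !! j" if "n - k \<le> j" "j < n" for j
  proof -
    have "Suc i \<le> j" using that kn by linarith
    moreover have "\<omega> !! (j - Suc i)" by (rule W) (use that kn in linarith)+
    ultimately show ?thesis unfolding snth_pre by simp
  qed
  then show ?thesis using kn unfolding Prt_def by (intro conjI ballI) auto
qed

lemma Prt_pre:
  assumes "i < k"
  shows "Prt k n (replicate i True @- False ## \<omega>) \<longleftrightarrow> (Suc i \<le> n \<and> Prt k (n - Suc i) \<omega>)"
  using Prt_pre1[OF assms] Prt_pre2[OF assms] by blast

lemma Least_shift:
  fixes P Q :: "nat \<Rightarrow> bool"
  assumes "\<And>n. P n \<longleftrightarrow> (c \<le> n \<and> Q (n - c))" and "\<exists>m. Q m"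
  shows "(LEAST n. P n) = c + (LEAST m. Q m)"
proof (rule Least_equality)
  show "P (c + (LEAST m. Q m))" using assms LeastI_ex[OF assms(2)] by simp
  fix y assume "P y"
  then have "c \<le> y" "Q (y - c)" using assms by auto
  then show "c + (LEAST m. Q m) \<le> y" using Least_le[of Q "y - c"] by simp
qed

lemma run_time_Prt: "run_time k \<omega> = (LEAST n. Prt k n \<omega>)"
  by (simp add: run_time_def Prt_def)

lemma Yt_pre:
  assumes "i < k"
  shows "Yt k (replicate i True @- False ## \<omega>) = ennreal (real (Suc i)) + Yt k \<omega>"
proof (cases "\<exists>m. Prt k m \<omega>")
  case True
  have ex: "\<exists>n. Prt k n (replicate i True @- False ## \<omega>)"
    using True Prt_pre[OF assms] by (metis add_diff_cancel_right' le_add2)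
  have "run_time k (replicate i True @- False ## \<omega>) = Suc i + run_time k \<omega>"
    unfolding run_time_Prt by (rule Least_shift[OF Prt_pre[OF assms] True])
  then show ?thesis using True ex unfolding Yt_def by (simp add: ennreal_plus[symmetric] del: ennreal_plus)
next
  case False
  then have "\<not> (\<exists>n. Prt k n (replicate i True @- False ## \<omega>))"
    using Prt_pre[OF assms] by auto
  then show ?thesis using False unfolding Yt_def by simp
qed

lemma Yt_all:
  "Yt k (replicate k True @- \<omega>) = ennreal (real k)"
proof -
  have P: "Prt k k (replicate k True @- \<omega>)" unfolding Prt_def by (simp add: shift_snth)
  have "run_time k (replicate k True @- \<omega>) = k"
    unfolding run_time_def
  proof (rule Least_equality)
    show "k \<le> k \<and> (\<forall>i\<in>{k - k..<k}. (replicate k True @- \<omega>) !! i)" using P unfolding Prt_def by simp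
  qed simp
  then show ?thesis using P unfolding Yt_def by auto
qed

lemma prob_coin: "0 \<le> p \<Longrightarrow> p \<le> 1 \<Longrightarrow> prob_space (coin_space p)"
  unfolding coin_space_def
  by (rule prob_space.prob_space_stream_space[OF prob_space_measure_pmf])

lemma main_eq:
  assumes p: "0 \<le> p" "p \<le> 1" and h[measurable]: "h \<in> borel_measurable borel"
  shows "(\<integral>\<^sup>+\<omega>. h (Yt k \<omega>) \<partial>coin_space p) =
     (\<Sum>i<k. ennreal (p^i*(1-p)) * (\<integral>\<^sup>+\<omega>. h (ennreal (real (Suc i)) + Yt k \<omega>) \<partial>coin_space p))
     + ennreal (p^k) * h (ennreal (real k))"
proof -
  interpret S: prob_space "coin_space p" by (rule prob_coin[OF p])
  have G: "(\<lambda>\<omega>. h (Yt k \<omega>)) \<in> borel_measurable (coin_space p)"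
    unfolding coin_space_def by measurable
  have e: "(\<Sum>i<k. ennreal (p^i*(1-p)) * (\<integral>\<^sup>+\<omega>. h (Yt k (replicate i True @- False ## \<omega>)) \<partial>coin_space p))
     = (\<Sum>i<k. ennreal (p^i*(1-p)) * (\<integral>\<^sup>+\<omega>. h (ennreal (real (Suc i)) + Yt k \<omega>) \<partial>coin_space p))"
    by (rule sum.cong) (simp_all only: Yt_pre lessThan_iff)
  show ?thesis
    unfolding iter_decomp[OF p G, of k] Yt_all e
    by (simp add: S.emeasure_space_1)
qed



lemma binom_int:
  assumes f[measurable]: "f \<in> borel_measurable M" and a: "0 \<le> a"
  shows "(\<integral>\<^sup>+\<omega>. (ennreal a + f \<omega>)^m \<partial>M) = (\<Sum>l\<le>m. ennreal (real (m choose l) * a^(m-l)) * (\<integral>\<^sup>+\<omega>. f \<omega> ^ l \<partial>M))"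
proof -
  have "(ennreal a + f \<omega>)^m = (\<Sum>l\<le>m. ennreal (real (m choose l) * a^(m-l)) * f \<omega> ^ l)" for \<omega>
  proof -
    have "(ennreal a + f \<omega>)^m = (\<Sum>l\<le>m. of_nat (m choose l) * f \<omega> ^ l * ennreal a ^ (m - l))"
      by (subst add.commute, rule binomial_ring)
    also have "\<dots> = (\<Sum>l\<le>m. ennreal (real (m choose l) * a^(m-l)) * f \<omega> ^ l)"
      by (rule sum.cong) (simp_all add: ennreal_mult ennreal_power a ennreal_of_nat_eq_real_of_nat mult_ac)
    finally show ?thesis .
  qed
  then show ?thesis by (simp add: nn_integral_sum nn_integral_cmult)
qed

definition mom :: "real \<Rightarrow> nat \<Rightarrow> nat \<Rightarrow> ennreal" where
  "mom p k m = (\<integral>\<^sup>+\<omega>. Yt k \<omega> ^ m \<partial>coin_space p)"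

definition tr :: "real \<Rightarrow> nat \<Rightarrow> nat \<Rightarrow> nat \<Rightarrow> ennreal" where
  "tr p k N m = (\<integral>\<^sup>+\<omega>. min (Yt k \<omega>) (of_nat N) ^ m \<partial>coin_space p)"

definition FF :: "real \<Rightarrow> nat \<Rightarrow> (nat \<Rightarrow> ennreal) \<Rightarrow> nat \<Rightarrow> ennreal" where
  "FF p k X m = (\<Sum>i<k. ennreal (p^i*(1-p)) * (\<Sum>l\<le>m. ennreal (real (m choose l) * (real (Suc i))^(m-l)) * X l))
     + ennreal (p^k * real k ^ m)"

lemma mom_eq:
  assumes p: "0 \<le> p" "p \<le> 1"
  shows "mom p k m = FF p k (mom p k) m"
proof -
  have "mom p k m = (\<Sum>i<k. ennreal (p^i*(1-p)) * (\<integral>\<^sup>+\<omega>. (ennreal (real (Suc i)) + Yt k \<omega>)^m \<partial>coin_space p))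
     + ennreal (p^k) * (ennreal (real k))^m"
    unfolding mom_def by (rule main_eq[OF p]) measurable
  also have "\<dots> = FF p k (mom p k) m"
    unfolding FF_def mom_def
    by (subst binom_int) (auto simp: coin_space_def ennreal_power ennreal_mult[symmetric] p)
  finally show ?thesis .
qed

lemma min_add_le: "min (a + y) N \<le> a + min y (N::ennreal)"
proof (cases "y \<le> N")
  case True
  then have "min y N = y" by simp
  then show ?thesis by (simp add: min.coboundedI1)
next
  case False
  then have "min y N = N" by simp
  then show ?thesis by (simp add: min.coboundedI2 add_increasing)
qed

lemma tr_le:
  assumes p: "0 \<le> p" "p \<le> 1"
  shows "tr p k N m \<le> FF p k (tr p k N) m"
proof -
  have "tr p k N m = (\<Sum>i<k. ennreal (p^i*(1-p)) * (\<integral>\<^sup>+\<omega>. min (ennreal (real (Suc i)) + Yt k \<omega>) (of_nat N) ^m \<partial>coin_space p))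
     + ennreal (p^k) * min (ennreal (real k)) (of_nat N) ^ m"
    unfolding tr_def by (rule main_eq[OF p]) measurable
  also have "\<dots> \<le> (\<Sum>i<k. ennreal (p^i*(1-p)) * (\<integral>\<^sup>+\<omega>. (ennreal (real (Suc i)) + min (Yt k \<omega>) (of_nat N)) ^m \<partial>coin_space p))
     + ennreal (p^k) * (ennreal (real k)) ^ m"
    by (intro add_mono sum_mono mult_left_mono nn_integral_mono power_mono min_add_le) auto
  also have "\<dots> = FF p k (tr p k N) m"
    unfolding FF_def tr_def
    by (subst binom_int) (auto simp: coin_space_def ennreal_power ennreal_mult[symmetric] p)
  finally show ?thesis .
qed

definition RR :: "real \<Rightarrow> nat \<Rightarrow> (nat \<Rightarrow> ennreal) \<Rightarrow> nat \<Rightarrow> ennreal" where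
  "RR p k X m = (\<Sum>i<k. ennreal (p^i*(1-p)) * (\<Sum>l<m. ennreal (real (m choose l) * (real (Suc i))^(m-l)) * X l))
     + ennreal (p^k * real k ^ m)"

lemma geom: "(\<Sum>i<k. (p::real)^i*(1-p)) = 1 - p^k"
  by (induction k) (auto simp: algebra_simps)

lemma FF_split:
  assumes p: "0 \<le> p" "p \<le> 1"
  shows "FF p k X m = ennreal (1 - p^k) * X m + RR p k X m"
proof -
  have "FF p k X m = (\<Sum>i<k. ennreal (p^i*(1-p)) * X m + ennreal (p^i*(1-p)) * (\<Sum>l<m. ennreal (real (m choose l) * (real (Suc i))^(m-l)) * X l))
     + ennreal (p^k * real k ^ m)"
    unfolding FF_def by (simp add: lessThan_Suc_atMost[symmetric] distrib_left add_ac)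
  also have "\<dots> = (\<Sum>i<k. ennreal (p^i*(1-p))) * X m + RR p k X m"
    unfolding RR_def sum.distrib sum_distrib_right by (simp add: add.assoc)
  also have "(\<Sum>i<k. ennreal (p^i*(1-p))) = ennreal (1 - p^k)"
    using p by (subst sum_ennreal) (auto simp: geom)
  finally show ?thesis .
qed

lemma RR_mono:
  assumes "\<And>l. l < m \<Longrightarrow> X l \<le> Y l"
  shows "RR p k X m \<le> RR p k Y m"
  unfolding RR_def using assms
  by (intro add_mono sum_mono mult_left_mono order.refl) auto

lemma tr_le_mom: "tr p k N l \<le> mom p k l"
  unfolding tr_def mom_def by (intro nn_integral_mono power_mono) auto

lemma tr_fin:
  assumes p: "0 \<le> p" "p \<le> 1"
  shows "tr p k N m < \<top>"
proof -
  interpret S: prob_space "coin_space p" by (rule prob_coin[OF p])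
  have "tr p k N m \<le> (\<integral>\<^sup>+\<omega>. of_nat N ^ m \<partial>coin_space p)"
    unfolding tr_def by (intro nn_integral_mono power_mono) auto
  also have "\<dots> = of_nat N ^ m" by (simp add: S.emeasure_space_1)
  also have "\<dots> < \<top>" by (simp add: ennreal_of_nat_eq_real_of_nat ennreal_power)
  finally show ?thesis .
qed

lemma cancel:
  fixes x R :: ennreal
  assumes "x < \<top>" "x \<le> ennreal (1-q) * x + R" "0 \<le> q" "q \<le> 1"
  shows "ennreal q * x \<le> R"
proof (cases "R = \<top>")
  case False
  obtain r where r: "x = ennreal r" "0 \<le> r" using assms(1) by (cases x) auto
  obtain s where s: "R = ennreal s" "0 \<le> s" using False by (cases R) auto
  have "ennreal r \<le> ennreal ((1-q)*r + s)"
    using assms(2) r s assms(3,4) by (simp add: ennreal_mult)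
  then have "r \<le> (1-q)*r + s" using s r assms by (subst (asm) ennreal_le_iff) auto
  then have "q * r \<le> s" by (simp add: algebra_simps)
  then show ?thesis using r s assms by (simp add: ennreal_mult[symmetric])
qed simp

lemma sup_pow: "(SUP N. min y (of_nat N) ^ m) = (y::ennreal) ^ m"
proof (rule antisym)
  show "(SUP N. min y (of_nat N) ^ m) \<le> y ^ m"
    by (intro SUP_least power_mono) auto
next
  show "y ^ m \<le> (SUP N. min y (of_nat N) ^ m)"
  proof (cases "y = \<top>")
    case False
    then obtain r where r: "y = ennreal r" "0 \<le> r" by (cases y) auto
    obtain N where "r \<le> real N" using real_arch_simple by blast
    then have "y \<le> of_nat N" using r by (simp add: ennreal_of_nat_eq_real_of_nat)
    then have "min y (of_nat N) ^ m = y ^ m" by simp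
    then show ?thesis by (metis SUP_upper UNIV_I)
  next
    case True
    show ?thesis
    proof (cases m)
      case 0 then show ?thesis by simp
    next
      case (Suc m')
      have "of_nat N \<le> min y (of_nat N) ^ m" for N
      proof -
        have "(N::nat) \<le> N ^ m"
        proof (cases "N = 0")
          case False
          then have "1 \<le> N ^ m'" by (simp add: Suc_leI)
          then have "N * 1 \<le> N * N ^ m'" by (rule mult_left_mono) simp
          then show ?thesis using Suc by simp
        qed (use Suc in simp)
        then have "(of_nat N :: ennreal) \<le> of_nat (N ^ m)" by (simp only: of_nat_le_iff)
        then show ?thesis using True by simp
      qed
      then have "(SUP N. of_nat N :: ennreal) \<le> (SUP N. min y (of_nat N) ^ m)"
        by (intro SUP_mono) auto
      then have "(SUP N. min y (of_nat N) ^ m) = \<top>" by (simp only: ennreal_SUP_of_nat_eq_top top_unique)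
      then show ?thesis by (metis top_greatest)
    qed
  qed
qed

lemma mom_SUP:
  shows "mom p k m = (SUP N. tr p k N m)"
proof -
  have "mom p k m = (\<integral>\<^sup>+\<omega>. (SUP N. min (Yt k \<omega>) (of_nat N) ^ m) \<partial>coin_space p)"
    unfolding mom_def sup_pow ..
  also have "\<dots> = (SUP N. tr p k N m)"
    unfolding tr_def
  proof (rule nn_integral_monotone_convergence_SUP)
    show "incseq (\<lambda>N \<omega>. min (Yt k \<omega>) (of_nat N) ^ m)"
      by (auto simp: incseq_def le_fun_def intro!: power_mono min.mono)
    show "(\<lambda>\<omega>. min (Yt k \<omega>) (of_nat N) ^ m) \<in> borel_measurable (coin_space p)" for N
      unfolding coin_space_def by measurable
  qed
  finally show ?thesis .
qed

lemma mom_fin: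
  assumes p: "0 < p" "p \<le> 1"
  shows "mom p k m < \<top>"
proof (induction m rule: less_induct)
  case (less m)
  have q: "0 < p^k" "p^k \<le> 1" using p by (auto simp: power_le_one)
  have Rfin: "RR p k (mom p k) m < \<top>"
    unfolding RR_def using less by (simp add: ennreal_mult_less_top)
  have b: "ennreal (p^k) * tr p k N m \<le> RR p k (mom p k) m" for N
  proof (rule cancel)
    show "tr p k N m < \<top>" using p by (intro tr_fin) auto
    have "tr p k N m \<le> FF p k (tr p k N) m" using p by (intro tr_le) auto
    also have "\<dots> = ennreal (1 - p^k) * tr p k N m + RR p k (tr p k N) m"
      using p by (intro FF_split) auto
    also have "\<dots> \<le> ennreal (1 - p^k) * tr p k N m + RR p k (mom p k) m"
      by (intro add_mono order.refl RR_mono tr_le_mom)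
    finally show "tr p k N m \<le> ennreal (1 - p^k) * tr p k N m + RR p k (mom p k) m" .
  qed (use q in auto)
  have "ennreal (p^k) * mom p k m = (SUP N. ennreal (p^k) * tr p k N m)"
    unfolding mom_SUP by (rule SUP_mult_left_ennreal)
  also have "\<dots> \<le> RR p k (mom p k) m" by (intro SUP_least b)
  finally have "ennreal (p^k) * mom p k m < \<top>" using Rfin by (rule le_less_trans)
  then show ?case using q p by (auto simp: ennreal_mult_less_top)
qed

lemma mom_real:
  assumes p: "0 < p" "p \<le> 1"
  shows "p^k * enn2real (mom p k m) = p^k * real k ^ m +
     (\<Sum>i<k. p^i*(1-p) * (\<Sum>l<m. real (m choose l) * (real (Suc i))^(m-l) * enn2real (mom p k l)))"
proof -
  define a where "a l = enn2real (mom p k l)" for l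
  have ma: "mom p k l = ennreal (a l)" for l
    unfolding a_def using mom_fin[OF p, of k l] by (cases "mom p k l") auto
  have a0: "0 \<le> a l" for l unfolding a_def by simp
  have q: "0 < p^k" "p^k \<le> 1" using p by (auto simp: power_le_one)
  define rr where "rr = p^k * real k ^ m +
     (\<Sum>i<k. p^i*(1-p) * (\<Sum>l<m. real (m choose l) * (real (Suc i))^(m-l) * a l))"
  have rr0: "0 \<le> (\<Sum>i<k. p^i*(1-p) * (\<Sum>l<m. real (m choose l) * (real (Suc i))^(m-l) * a l))"
    using p a0 by (intro sum_nonneg mult_nonneg_nonneg) auto
  have R: "RR p k (mom p k) m = ennreal rr"
    unfolding RR_def rr_def ma using p a0 rr0
    by (simp add: ennreal_mult' sum_nonneg add.commute sum_ennreal[symmetric] del: sum_ennreal)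
  have "ennreal (a m) = ennreal (1 - p^k) * ennreal (a m) + ennreal rr"
    using mom_eq[of p k m] FF_split[of p k "mom p k" m] p unfolding R ma by simp
  also have "\<dots> = ennreal ((1 - p^k) * a m + rr)"
    using q a0[of m] rr0 unfolding rr_def by (simp add: ennreal_mult)
  finally have "a m = (1 - p^k) * a m + rr"
    using q a0[of m] rr0 unfolding rr_def by (subst (asm) ennreal_inj) auto
  then show ?thesis unfolding rr_def a_def[symmetric] by (simp add: algebra_simps)
qed



lemma S1: assumes "(p::real) \<noteq> 1" shows "(\<Sum>i<k. p^i*(1-p)*(real i+1)) = 1/(1-p) - p^k*(real k + 1/(1-p))"
proof (induction k)
  case (Suc k) show ?case unfolding sum.lessThan_Suc Suc.IH using assms by (simp add: field_simps)
qed simp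

lemma S2: assumes "(p::real) \<noteq> 1" shows "(\<Sum>i<k. p^i*(1-p)*(real i+1)^2) =
   (1+p)/(1-p)^2 - p^k*(real k^2 + 2*real k/(1-p) + (1+p)/(1-p)^2)"
proof (induction k)
  case (Suc k) show ?case unfolding sum.lessThan_Suc Suc.IH using assms by (simp add: field_simps) algebra
qed (use assms in \<open>simp add: field_simps\<close>)

lemma S3: assumes "(p::real) \<noteq> 1" shows "(\<Sum>i<k. p^i*(1-p)*(real i+1)^3) =
   (1+4*p+p^2)/(1-p)^3 - p^k*(real k^3 + 3*real k^2/(1-p) + 3*real k*(1+p)/(1-p)^2 + (1+4*p+p^2)/(1-p)^3)"
proof (induction k)
  case (Suc k) show ?case unfolding sum.lessThan_Suc Suc.IH using assms by (simp add: field_simps) algebra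
qed (use assms in \<open>simp add: field_simps\<close>)

lemma S4: assumes "(p::real) \<noteq> 1" shows "(\<Sum>i<k. p^i*(1-p)*(real i+1)^4) =
   (1+11*p+11*p^2+p^3)/(1-p)^4 - p^k*(real k^4 + 4*real k^3/(1-p) + 6*real k^2*(1+p)/(1-p)^2
     + 4*real k*(1+4*p+p^2)/(1-p)^3 + (1+11*p+11*p^2+p^3)/(1-p)^4)"
proof (induction k)
  case (Suc k) show ?case unfolding sum.lessThan_Suc Suc.IH using assms by (simp add: field_simps) algebra
qed (use assms in \<open>simp add: field_simps\<close>)



lemma alg:
  fixes p q K a1 a2 a3 a4 S1 S2 S3 S4 :: real
  assumes p: "0 < p" "p < 1" and q: "q > 0"
  and S1: "S1 = 1/(1-p) - q*(K + 1/(1-p))"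
  and S2: "S2 = (1+p)/(1-p)^2 - q*(K^2 + 2*K/(1-p) + (1+p)/(1-p)^2)"
  and S3: "S3 = (1+4*p+p^2)/(1-p)^3 - q*(K^3 + 3*K^2/(1-p) + 3*K*(1+p)/(1-p)^2 + (1+4*p+p^2)/(1-p)^3)"
  and S4: "S4 = (1+11*p+11*p^2+p^3)/(1-p)^4 - q*(K^4 + 4*K^3/(1-p) + 6*K^2*(1+p)/(1-p)^2
     + 4*K*(1+4*p+p^2)/(1-p)^3 + (1+11*p+11*p^2+p^3)/(1-p)^4)"
  and e1: "q*a1 = q*K + S1"
  and e2: "q*a2 = q*K^2 + S2 + 2*S1*a1"
  and e3: "q*a3 = q*K^3 + S3 + 3*S2*a1 + 3*S1*a2"
  and e4: "q*a4 = q*K^4 + S4 + 4*S3*a1 + 6*S2*a2 + 4*S1*a3"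
  shows "a1 = (1 - q) / ((1 - p) * q)"
   and "a2 = 2 * (1 - q) / ((1 - p) ^ 2 * q^2) - (2 * K + 1 - q) / ((1 - p) * q)"
   and "a3 = 6 * (1 - q) / ((1 - p) ^ 3 * q^3)
                   - (12 * K + 6 - (6 * K + 6) * q) / ((1 - p) ^ 2 * q^2)
                   + (3 * K ^ 2 + 3 * K + 1 - q) / ((1 - p) * q)"
   and "a4 = 24 * (1 - q) / ((1 - p) ^ 4 * q^4)
                   - (72 * K + 36 - (48 * K + 36) * q) / ((1 - p) ^ 3 * q^3)
                   + (48 * K ^ 2 + 48 * K + 14 - (12 * K ^ 2 + 24 * K + 14) * q)
                       / ((1 - p) ^ 2 * q^2)
                   - (4 * K ^ 3 + 6 * K ^ 2 + 4 * K + 1 - q) / ((1 - p) * q)"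
proof -
  have d: "1 - p \<noteq> 0" using p by simp
  have qn: "q \<noteq> 0" using q by simp
  define d where "d = 1 - p"
  have pd: "p = 1 - d" unfolding d_def by simp
  have dn: "d \<noteq> 0" using d d_def by simp
  have A1: "a1 = (q*K + S1)/q" using e1 qn by (simp add: field_simps)
  show f1: "a1 = (1 - q) / ((1 - p) * q)" unfolding A1 S1 using dn qn unfolding pd by (simp add: field_simps)
  have A2: "a2 = (q*K^2 + S2 + 2*S1*a1)/q" using e2 qn by (simp add: field_simps)
  show f2: "a2 = 2 * (1 - q) / ((1 - p) ^ 2 * q^2) - (2 * K + 1 - q) / ((1 - p) * q)"
    unfolding A2 S1 S2 f1 using dn qn unfolding pd by (simp add: field_simps) algebra
  have A3: "a3 = (q*K^3 + S3 + 3*S2*a1 + 3*S1*a2)/q" using e3 qn by (simp add: field_simps)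
  show f3: "a3 = 6 * (1 - q) / ((1 - p) ^ 3 * q^3)
                   - (12 * K + 6 - (6 * K + 6) * q) / ((1 - p) ^ 2 * q^2)
                   + (3 * K ^ 2 + 3 * K + 1 - q) / ((1 - p) * q)"
    unfolding A3 S1 S2 S3 f1 f2 using dn qn unfolding pd by (simp add: field_simps) algebra
  have A4: "a4 = (q*K^4 + S4 + 4*S3*a1 + 6*S2*a2 + 4*S1*a3)/q" using e4 qn by (simp add: field_simps)
  show "a4 = 24 * (1 - q) / ((1 - p) ^ 4 * q^4)
                   - (72 * K + 36 - (48 * K + 36) * q) / ((1 - p) ^ 3 * q^3)
                   + (48 * K ^ 2 + 48 * K + 14 - (12 * K ^ 2 + 24 * K + 14) * q)
                       / ((1 - p) ^ 2 * q^2)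
                   - (4 * K ^ 3 + 6 * K ^ 2 + 4 * K + 1 - q) / ((1 - p) * q)"
    unfolding A4 S1 S2 S3 S4 f1 f2 f3 using dn qn unfolding pd by (simp add: field_simps) algebra
qed



definition Ssum :: "real \<Rightarrow> nat \<Rightarrow> nat \<Rightarrow> real" where
  "Ssum p k r = (\<Sum>i<k. p^i*(1-p)*(real i+1)^r)"

lemma swap_form:
  "(\<Sum>i<k. p^i*(1-p) * (\<Sum>l<m. real (m choose l) * (real (Suc i))^(m-l) * a l))
   = (\<Sum>l<m. real (m choose l) * a l * Ssum p k (m-l))"
  unfolding Ssum_def sum_distrib_left
  by (subst sum.swap) (auto intro!: sum.cong simp: mult_ac add.commute)

lemma mom0: "0 \<le> p \<Longrightarrow> p \<le> 1 \<Longrightarrow> mom p k 0 = 1"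
proof -
  assume p: "0 \<le> p" "p \<le> 1"
  interpret S: prob_space "coin_space p" by (rule prob_coin[OF p])
  show ?thesis unfolding mom_def by (simp add: S.emeasure_space_1)
qed

lemma eqs:
  fixes p :: real and k :: nat
  assumes p: "0 < p" "p \<le> 1"
  defines "a \<equiv> \<lambda>l. enn2real (mom p k l)"
  shows "p^k * a 1 = p^k * real k + Ssum p k 1"
    and "p^k * a 2 = p^k * real k^2 + Ssum p k 2 + 2 * Ssum p k 1 * a 1"
    and "p^k * a 3 = p^k * real k^3 + Ssum p k 3 + 3 * Ssum p k 2 * a 1 + 3 * Ssum p k 1 * a 2"
    and "p^k * a 4 = p^k * real k^4 + Ssum p k 4 + 4 * Ssum p k 3 * a 1 + 6 * Ssum p k 2 * a 2 + 4 * Ssum p k 1 * a 3"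
proof -
  have a0: "a 0 = 1" unfolding a_def using mom0[of p k] p by simp
  have E: "p^k * a m = p^k * real k ^ m + (\<Sum>l<m. real (m choose l) * a l * Ssum p k (m-l))" for m
    using mom_real[OF p, of k m] unfolding a_def swap_form by simp
  show "p^k * a 1 = p^k * real k + Ssum p k 1" using E[of 1] a0 by simp
  show "p^k * a 2 = p^k * real k^2 + Ssum p k 2 + 2 * Ssum p k 1 * a 1"
    using E[of 2] a0 by (simp add: numeral_eq_Suc)
  show "p^k * a 3 = p^k * real k^3 + Ssum p k 3 + 3 * Ssum p k 2 * a 1 + 3 * Ssum p k 1 * a 2"
    using E[of 3] a0 by (simp add: numeral_eq_Suc)
  show "p^k * a 4 = p^k * real k^4 + Ssum p k 4 + 4 * Ssum p k 3 * a 1 + 6 * Ssum p k 2 * a 2 + 4 * Ssum p k 1 * a 3"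
    using E[of 4] a0 by (simp add: numeral_eq_Suc)
qed



lemma geo_sum:
  fixes p :: real
  assumes "0 < p" "p < 1"
  shows "(\<Sum>i=1..k. 1 / p ^ i) = (1 - p ^ k) / ((1 - p) * p ^ k)"
proof (induction k)
  case (Suc k)
  have "(\<Sum>i=1..Suc k. 1 / p ^ i) = (1 - p ^ k) / ((1 - p) * p ^ k) + 1 / p^Suc k"
    using Suc by (simp add: sum.cl_ivl_Suc)
  also have "\<dots> = (1 - p ^ Suc k) / ((1 - p) * p ^ Suc k)"
  proof -
    have d: "1 - p \<noteq> 0" "p \<noteq> 0" using assms by auto
    show ?thesis using d by (simp add: field_simps)
  qed
  finally show ?case .
qed simp

lemma int_rt:
  assumes p: "0 < p" "p < 1"
  shows "(\<integral>\<^sup>+\<omega>. ennreal (real (run_time k \<omega>) ^ m) \<partial>coin_space p) = ennreal (enn2real (mom p k m))"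
proof -
  have fin: "mom p k 1 < \<top>" using mom_fin[of p k 1] p by simp
  have fin': "(\<integral>\<^sup>+\<omega>. Yt k \<omega> \<partial>coin_space p) \<noteq> \<infinity>"
    using fin unfolding mom_def by simp
  have "AE \<omega> in coin_space p. Yt k \<omega> \<noteq> \<infinity>"
    by (rule nn_integral_PInf_AE[OF _ fin']) (simp add: coin_space_def)
  then have "AE \<omega> in coin_space p. ennreal (real (run_time k \<omega>) ^ m) = Yt k \<omega> ^ m"
    by eventually_elim (auto simp: Yt_def ennreal_power split: if_splits)
  then have "(\<integral>\<^sup>+\<omega>. ennreal (real (run_time k \<omega>) ^ m) \<partial>coin_space p) = mom p k m"
    unfolding mom_def by (rule nn_integral_cong_AE)
  also have "\<dots> = ennreal (enn2real (mom p k m))"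
    using mom_fin[of p k m] p by (cases "mom p k m") auto
  finally show ?thesis .
qed

theorem corollary3p2:
  fixes p :: real and k :: nat
  assumes "0 < p" and "p < 1" and "1 \<le> k"
  shows
    "(\<integral>\<^sup>+\<omega>. ennreal (real (run_time k \<omega>)) \<partial>coin_space p)
        = ennreal (\<Sum>i=1..k. 1 / p ^ i)
     \<and> (\<Sum>i=1..k. 1 / p ^ i) = (1 - p ^ k) / ((1 - p) * p ^ k)
     \<and> (\<integral>\<^sup>+\<omega>. ennreal (real (run_time k \<omega>) ^ 2) \<partial>coin_space p)
        = ennreal (2 * (1 - p ^ k) / ((1 - p) ^ 2 * p ^ (2 * k))
                   - (2 * real k + 1 - p ^ k) / ((1 - p) * p ^ k))
     \<and> (\<integral>\<^sup>+\<omega>. ennreal (real (run_time k \<omega>) ^ 3) \<partial>coin_space p)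
        = ennreal (6 * (1 - p ^ k) / ((1 - p) ^ 3 * p ^ (3 * k))
                   - (12 * real k + 6 - (6 * real k + 6) * p ^ k) / ((1 - p) ^ 2 * p ^ (2 * k))
                   + (3 * real k ^ 2 + 3 * real k + 1 - p ^ k) / ((1 - p) * p ^ k))
     \<and> (\<integral>\<^sup>+\<omega>. ennreal (real (run_time k \<omega>) ^ 4) \<partial>coin_space p)
        = ennreal (24 * (1 - p ^ k) / ((1 - p) ^ 4 * p ^ (4 * k))
                   - (72 * real k + 36 - (48 * real k + 36) * p ^ k) / ((1 - p) ^ 3 * p ^ (3 * k))
                   + (48 * real k ^ 2 + 48 * real k + 14 - (12 * real k ^ 2 + 24 * real k + 14) * p ^ k)
                       / ((1 - p) ^ 2 * p ^ (2 * k))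
                   - (4 * real k ^ 3 + 6 * real k ^ 2 + 4 * real k + 1 - p ^ k) / ((1 - p) * p ^ k))"
proof -
  define a where "a l = enn2real (mom p k l)" for l
  have p1: "p \<le> 1" using assms by simp
  note E = eqs[OF assms(1) p1, of k, folded a_def]
  have pn: "p \<noteq> 1" using assms by simp
  have q: "p^k > 0" using assms by simp
  have S1': "(\<Sum>i<k. p^i*(1-p)*(real i+1)^1) = 1/(1-p) - p^k*(real k + 1/(1-p))"
    using S1[OF pn, of k] by simp
  note AL = alg[OF assms(1,2) q S1' S2[OF pn, of k] S3[OF pn, of k] S4[OF pn, of k] E[unfolded Ssum_def]]
  have I: "(\<integral>\<^sup>+\<omega>. ennreal (real (run_time k \<omega>) ^ m) \<partial>coin_space p) = ennreal (a m)" for m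
    unfolding a_def using int_rt[OF assms(1,2)] .
  have pw: "p ^ (2 * k) = (p^k)^2" "p ^ (3 * k) = (p^k)^3" "p ^ (4 * k) = (p^k)^4"
    by (simp_all add: power_mult[symmetric] mult.commute)
  have G: "(\<Sum>i=1..k. 1 / p ^ i) = (1 - p ^ k) / ((1 - p) * p ^ k)" by (rule geo_sum[OF assms(1,2)])
  show ?thesis
    using I[of 1] I[of 2] I[of 3] I[of 4] AL G unfolding pw by simp
qed

end
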